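(* Let $\delta>1$ and let $P_1,\dots,P_n\in\mathbb{R}^d$ be distinct points such that every pairwise distance $c_{ij}=\|P_i-P_j\|$ ($i\neq j$) lies in $\{1,\delta\}$. Suppose the points are labeled so that $c_{in}=1$ for $1\le i\le h$ and $c_{in}=\delta$ for $h<i\le n-1$ (for some $0\le h\le n-1$). Let $M$ be the $(n-1)\times(n-1)$ matrix $M=(c_{in}^2+c_{jn}^2-c_{ij}^2)_{i,j=1}^{n-1}$ (with $c_{ii}=0$), let \[ D=\begin{bmatrix}(-3+\delta^2)J_h & -(1+\delta^2)J_{h,n-h-1}\\ -(1+\delta^2)J_{n-h-1,h} & (1-3\delta^2)J_{n-h-1}\end{bmatrix} \] (with $J_{p,q}$ the $p\times q$ all-ones matrix, $J_p=J_{p,p}$), and let \[ S=\frac{2M+D-(1+\delta^2)I_{n-1}}{\delta^2-1}. \] Let $\lambda_1\ge\lambda_2\ge\dots\ge\lambda_{n-1}$ be the eigenvalues of $S$ counted with multiplicity. Then $\lambda_i=\frac{1+\delta^2}{1-\delta^2}$ for every index $i$ with $d+2\le i\le n-2$, and $\lambda_{n-1}\le\frac{1+\delta^2}{1-\delta^2}$ whenever $n\ge d+3$. That is, $S$ has smallest eigenvalue $\lambda_{n-1}$ (counted once) and second smallest eigenvalue $\frac{1+\delta^2}{1-\delta^2}$, the latter with multiplicity at least $n-d-3$.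
   Context: $S$ is a Seidel matrix: a real symmetric matrix with zero diagonal and all off-diagonal entries equal to $\pm1$. The matrix $M$ is positive semidefinite of rank at most $d$ (it is twice the Gram matrix of the vectors $P_i-P_n$). *)

theory Defs
  imports "HOL-Analysis.Analysis" "Jordan_Normal_Form.Char_Poly"
begin

definition cdist :: "(nat \<Rightarrow> 'a::metric_space) \<Rightarrow> nat \<Rightarrow> nat \<Rightarrow> real" where
  "cdist P i j = dist (P i) (P j)"

text \<open>The (n-1)x(n-1) matrix M; matrix index k (0-based) corresponds to point k+1.\<close>
definition Mmat :: "(nat \<Rightarrow> 'a::metric_space) \<Rightarrow> nat \<Rightarrow> real mat" where
  "Mmat P n = mat (n - 1) (n - 1) (\<lambda>(i, j).
      (cdist P (i+1) n)^2 + (cdist P (j+1) n)^2 - (cdist P (i+1) (j+1))^2)"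

definition Dmat :: "real \<Rightarrow> nat \<Rightarrow> nat \<Rightarrow> real mat" where
  "Dmat \<delta> n h = mat (n - 1) (n - 1) (\<lambda>(i, j).
      if i < h \<and> j < h then -3 + \<delta>^2
      else if h \<le> i \<and> h \<le> j then 1 - 3 * \<delta>^2
      else -(1 + \<delta>^2))"

definition Smat :: "real \<Rightarrow> (nat \<Rightarrow> 'a::metric_space) \<Rightarrow> nat \<Rightarrow> nat \<Rightarrow> real mat" where
  "Smat \<delta> P n h = (1 / (\<delta>^2 - 1)) \<cdot>\<^sub>m
      (2 \<cdot>\<^sub>m Mmat P n + Dmat \<delta> n h - (1 + \<delta>^2) \<cdot>\<^sub>m 1\<^sub>m (n - 1))"

text \<open>es is the list of eigenvalues of A counted with multiplicity (roots of the
  characteristic polynomial), in non-increasing order.\<close>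
definition eigvals_desc :: "real mat \<Rightarrow> real list \<Rightarrow> bool" where
  "eigvals_desc A es \<longleftrightarrow> char_poly A = (\<Prod>a\<leftarrow>es. [:-a, 1:]) \<and> sorted_wrt (\<ge>) es"

end

theory Submission
  imports Defs "Jordan_Normal_Form.Schur_Decomposition"
begin

lemma conj_real_vec: "conjugate (w :: real vec) = w"
  by (rule eq_vecI, auto simp: conjugate_vec_def)

lemma smult_vCons: "c \<cdot>\<^sub>v vCons a w = vCons (c*a) (c \<cdot>\<^sub>v w)"
  by (rule eq_vecI) (auto simp: vec_index_vCons)

lemma spectral_sym:
  fixes A :: "real mat"
  assumes "A \<in> carrier_mat n n" "A\<^sup>T = A" "char_poly A = (\<Prod>e\<leftarrow>es. [:-e,1:])"
  shows "\<exists>vs. length vs = n \<and> (\<forall>i<n. vs!i \<in> carrier_vec n \<and> A *\<^sub>v vs!i = es!i \<cdot>\<^sub>v vs!i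
     \<and> scalar_prod (vs!i) (vs!i) \<noteq> 0) \<and> (\<forall>i<n. \<forall>j<n. i\<noteq>j \<longrightarrow> scalar_prod (vs!i) (vs!j) = 0)"
  using assms
proof (induct es arbitrary: n A)
  case Nil
  then have "n = 0" using degree_monic_char_poly[of A n] by auto
  then show ?case by auto
next
  case (Cons e es n A)
  from Cons have A: "A \<in> carrier_mat n n" and sym: "A\<^sup>T = A" by auto
  from Cons(4)
  have cp: "char_poly A = [: -e, 1 :] * (\<Prod>e \<leftarrow> es. [:- e, 1:])" by auto
  have mon: "monic (\<Prod>e\<leftarrow> es. [:- e, 1:])" by (rule monic_prod_list, auto)
  have deg: "degree (char_poly A) = Suc (degree (\<Prod>e\<leftarrow> es. [:- e, 1:]))" unfolding cp
    by (subst degree_mult_eq, insert mon, auto)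
  with degree_monic_char_poly[OF A] have n: "n \<noteq> 0" by auto
  then obtain m where nm: "n = Suc m" by (cases n) auto
  have e: "eigenvalue A e" 
    unfolding eigenvalue_root_char_poly[OF A] cp by simp
  then obtain v where "eigenvector A v e" unfolding eigenvalue_def by auto
  then have v: "v \<in> carrier_vec n" and v0: "v \<noteq> 0\<^sub>v n" and ev: "A *\<^sub>v v = e \<cdot>\<^sub>v v"
    unfolding eigenvector_def using A by auto
  interpret cof_vec_space n "TYPE(real)" .
  define b where "b = basis_completion v"
  define ws where "ws = gram_schmidt n b"
  from basis_completion[OF v v0, folded b_def]
  have dist_b: "distinct b" 
    and indep: "\<not> lin_dep (set b)" and b: "set b \<subseteq> carrier_vec n" and hdb: "hd b = v" 
    and len_b: "length b = n" by auto
  from hdb len_b n obtain vs where bv: "b = v # vs" by (cases b, auto)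
  from gram_schmidt_result[OF b dist_b indep refl, folded ws_def]
  have ws: "set ws \<subseteq> carrier_vec n" "corthogonal ws" "length ws = n" 
    by (auto simp: len_b)
  from gram_schmidt_hd[OF v, of vs, folded bv] have hdws: "hd ws = v" unfolding ws_def .
  have ws0: "ws ! 0 = v" using hdws ws(3) n by (cases ws) auto
  have wsc: "\<And>i. i < n \<Longrightarrow> ws ! i \<in> carrier_vec n" using ws by auto
  have wsorth: "\<And>i j. i < n \<Longrightarrow> j < n \<Longrightarrow> scalar_prod (ws!i) (ws!j) = 0 \<longleftrightarrow> i \<noteq> j"
    using ws(2,3) unfolding corthogonal_def by (simp add: conj_real_vec)
  define nr where "nr = (\<lambda>w. 1 / sqrt (scalar_prod w (w :: real vec)))"
  define us where "us = map (\<lambda>w. nr w \<cdot>\<^sub>v w) ws"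
  have lus: "length us = n" using ws(3) us_def by simp
  have usc: "\<And>i. i < n \<Longrightarrow> us ! i \<in> carrier_vec n" using wsc ws(3) us_def by simp
  have wspos: "scalar_prod (ws!i) (ws!i) > 0" if "i < n" for i
  proof -
    have "scalar_prod (ws!i) (ws!i) \<ge> 0"
      unfolding scalar_prod_def by (intro sum_nonneg) auto
    with wsorth[OF that that] show ?thesis by auto
  qed
  have usorth: "scalar_prod (us!i) (us!j) = (if i = j then 1 else 0)" if "i < n" "j < n" for i j
  proof -
    have "scalar_prod (us!i) (us!j) = nr (ws!i) * nr (ws!j) * scalar_prod (ws!i) (ws!j)"
      using that ws(3) wsc[OF that(1)] wsc[OF that(2)] unfolding us_def by simp
    moreover have "nr (ws!i) * nr (ws!i) * scalar_prod (ws!i) (ws!i) = 1"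
      using wspos[OF that(1)] unfolding nr_def
      by (simp add: field_simps)
    ultimately show ?thesis using wsorth[OF that] by auto
  qed
  define U where "U = mat_of_cols n us"
  have U: "U \<in> carrier_mat n n" unfolding U_def using lus by auto
  have colU: "\<And>j. j < n \<Longrightarrow> col U j = us ! j" unfolding U_def using lus usc by auto
  have UTU: "U\<^sup>T * U = 1\<^sub>m n"
  proof (rule eq_matI)
    fix i j assume ij: "i < dim_row (1\<^sub>m n)" "j < dim_col (1\<^sub>m n)"
    then have "(U\<^sup>T * U) $$ (i,j) = scalar_prod (col U i) (col U j)" using U by simp
    also have "\<dots> = (1\<^sub>m n) $$ (i,j)" using ij colU usorth by simp
    finally show "(U\<^sup>T * U) $$ (i,j) = (1\<^sub>m n) $$ (i,j)" .
  qed (use U in auto)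
  have UUT: "U * U\<^sup>T = 1\<^sub>m n" using mat_mult_left_right_inverse[OF _ U UTU] U by auto
  define A' where "A' = U\<^sup>T * A * U"
  have A': "A' \<in> carrier_mat n n" unfolding A'_def using U A by auto
  have symA': "A'\<^sup>T = A'"
  proof -
    have UTA: "U\<^sup>T * A \<in> carrier_mat n n" using U A by auto
    have "A'\<^sup>T = U\<^sup>T * (U\<^sup>T * A)\<^sup>T" unfolding A'_def
      using transpose_mult[OF UTA U] by simp
    also have "(U\<^sup>T * A)\<^sup>T = A\<^sup>T * U" using transpose_mult[of "U\<^sup>T" n n A n] U A by simp
    also have "U\<^sup>T * (A\<^sup>T * U) = A'" unfolding A'_def sym using U A
      by (simp add: assoc_mult_mat[of _ n n _ n _ n])
    finally show ?thesis .
  qed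
  have UA': "U * A' = A * U"
  proof -
    have "U * A' = (U * U\<^sup>T) * A * U" unfolding A'_def using U A
      by (simp add: assoc_mult_mat[of _ n n _ n _ n])
    also have "\<dots> = A * U" using UUT A U by simp
    finally show ?thesis .
  qed
  have Uvec: "A *\<^sub>v (U *\<^sub>v y) = U *\<^sub>v (A' *\<^sub>v y)" if "y \<in> carrier_vec n" for y
    using that UA' A U A' by (metis assoc_mult_mat_vec)
  have Uscal: "scalar_prod (U *\<^sub>v y) (U *\<^sub>v z) = scalar_prod y z"
    if "y \<in> carrier_vec n" "z \<in> carrier_vec n" for y z
  proof -
    have "scalar_prod (U *\<^sub>v y) (U *\<^sub>v z) = scalar_prod (U\<^sup>T *\<^sub>v (U *\<^sub>v y)) z"
      using transpose_vec_mult_scalar[OF U that(2), of "U *\<^sub>v y"] U that by simp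
    also have "U\<^sup>T *\<^sub>v (U *\<^sub>v y) = y" using UTU U that
      by (metis assoc_mult_mat_vec carrier_matD(1) carrier_matD(2) index_transpose_mat(2,3) one_mult_mat_vec carrier_matI)
    finally show ?thesis .
  qed
  have Uunit: "U *\<^sub>v unit_vec n 0 = us ! 0"
  proof (rule eq_vecI)
    fix i assume "i < dim_vec (us ! 0)"
    then have i: "i < n" using usc[of 0] n by auto
    then have "(U *\<^sub>v unit_vec n 0) $ i = U $$ (i, 0)" using U n by (simp add: scalar_prod_right_unit)
    also have "\<dots> = col U 0 $ i" using U i n by simp
    finally show "(U *\<^sub>v unit_vec n 0) $ i = us ! 0 $ i" using colU[of 0] n by simp
  qed (use U usc[of 0] n in auto)
  have UTUv: "U\<^sup>T *\<^sub>v (U *\<^sub>v y) = y" if "y \<in> carrier_vec n" for y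
    using UTU U that
    by (metis assoc_mult_mat_vec carrier_matD(1) carrier_matD(2) index_transpose_mat(2,3) one_mult_mat_vec carrier_matI)
  have us0: "us ! 0 = nr v \<cdot>\<^sub>v v" unfolding us_def using ws0 ws(3) n by simp
  have Aus0: "A *\<^sub>v us ! 0 = e \<cdot>\<^sub>v us ! 0" unfolding us0 using mult_mat_vec[OF A v] ev
    by (simp add: smult_smult_assoc mult.commute)
  have unitc: "unit_vec n 0 \<in> carrier_vec n" by simp
  have A'unit: "A' *\<^sub>v unit_vec n 0 = e \<cdot>\<^sub>v unit_vec n 0"
  proof -
    have "A' *\<^sub>v unit_vec n 0 = U\<^sup>T *\<^sub>v (U *\<^sub>v (A' *\<^sub>v unit_vec n 0))"
      using UTUv A' by simp
    also have "\<dots> = U\<^sup>T *\<^sub>v (A *\<^sub>v us ! 0)" using Uvec[OF unitc] Uunit by simp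
    also have "\<dots> = U\<^sup>T *\<^sub>v (e \<cdot>\<^sub>v us ! 0)" using Aus0 by simp
    also have "\<dots> = e \<cdot>\<^sub>v (U\<^sup>T *\<^sub>v us ! 0)" using U usc[of 0] n
      by (subst mult_mat_vec[of _ n n]) auto
    also have "\<dots> = e \<cdot>\<^sub>v unit_vec n 0" using UTUv[OF unitc] Uunit by simp
    finally show ?thesis .
  qed
  have A'col: "A' $$ (i, 0) = (if i = 0 then e else 0)" if "i < n" for i
  proof -
    have "A' $$ (i, 0) = (A' *\<^sub>v unit_vec n 0) $ i" using A' that n by (simp add: scalar_prod_right_unit)
    then show ?thesis unfolding A'unit using that n by simp
  qed
  have A'row: "A' $$ (0, j) = (if j = 0 then e else 0)" if "j < n" for j
  proof -
    have "A' $$ (0, j) = A'\<^sup>T $$ (j, 0)" using A' that n by simp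
    then show ?thesis using symA' A'col[OF that] by simp
  qed
  define A3 where "A3 = mat m m (\<lambda>(i,j). A' $$ (Suc i, Suc j))"
  define A1 where "A1 = mat 1 1 (\<lambda>_. e)"
  have A3: "A3 \<in> carrier_mat m m" unfolding A3_def by simp
  have A1: "A1 \<in> carrier_mat 1 1" unfolding A1_def by simp
  have blk: "A' = four_block_mat A1 (0\<^sub>m 1 m) (0\<^sub>m m 1) A3"
  proof (rule eq_matI)
    fix i j assume "i < dim_row (four_block_mat A1 (0\<^sub>m 1 m) (0\<^sub>m m 1) A3)"
      "j < dim_col (four_block_mat A1 (0\<^sub>m 1 m) (0\<^sub>m m 1) A3)"
    then have ij: "i < n" "j < n" using A1 A3 nm by auto
    show "A' $$ (i, j) = four_block_mat A1 (0\<^sub>m 1 m) (0\<^sub>m m 1) A3 $$ (i, j)"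
      using ij A'col A'row nm unfolding A1_def A3_def
      by (cases i; cases j; auto)
  qed (use A' A1 A3 nm in auto)
  have "similar_mat A' A" unfolding similar_mat_def
    by (rule exI[of _ "U\<^sup>T"], rule exI[of _ U], unfold similar_mat_wit_def Let_def)
      (use A' A U UTU UUT in \<open>auto simp: A'_def\<close>)
  then have "char_poly A' = char_poly A" by (rule char_poly_similar)
  also have "char_poly A' = char_poly A1 * char_poly A3"
    unfolding blk by (rule char_poly_four_block_zeros_col[OF A1 _ A3]) auto
  also have "char_poly A1 = [: -e,1 :]"
    by (simp add: A1_def char_poly_defs det_def sign_def)
  finally have cp3: "char_poly A3 = (\<Prod> e \<leftarrow> es. [:- e, 1:])" unfolding cp
    by (metis mult_cancel_left pCons_eq_0_iff zero_neq_one)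
  have sym3: "A3\<^sup>T = A3"
  proof (rule eq_matI)
    fix i j assume "i < dim_row A3" "j < dim_col A3"
    then have ij: "i < m" "j < m" using A3 by auto
    have "A' $$ (Suc j, Suc i) = A'\<^sup>T $$ (Suc i, Suc j)" using ij A' nm by simp
    then show "A3\<^sup>T $$ (i, j) = A3 $$ (i, j)" using ij symA' unfolding A3_def by simp
  qed (use A3 in auto)
  from Cons(1)[OF A3 sym3 cp3] obtain vs3 where
    l3: "length vs3 = m" and
    p3: "\<forall>i<m. vs3!i \<in> carrier_vec m \<and> A3 *\<^sub>v vs3!i = es!i \<cdot>\<^sub>v vs3!i \<and> scalar_prod (vs3!i) (vs3!i) \<noteq> 0"
    and o3: "\<forall>i<m. \<forall>j<m. i\<noteq>j \<longrightarrow> scalar_prod (vs3!i) (vs3!j) = 0" by blast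
  have A'v: "A' *\<^sub>v vCons a w = vCons (e * a) (A3 *\<^sub>v w)" if "w \<in> carrier_vec m" for a w
  proof (rule eq_vecI)
    fix i assume "i < dim_vec (vCons (e * a) (A3 *\<^sub>v w))"
    then have i: "i < n" using A3 nm by simp
    have rw: "row A' i = vCons (A' $$ (i,0)) (vec m (\<lambda>j. A' $$ (i, Suc j)))"
      using A' i nm unfolding row_def by (simp add: vec_Suc o_def)
    have "(A' *\<^sub>v vCons a w) $ i = A' $$ (i,0) * a + scalar_prod (vec m (\<lambda>j. A' $$ (i, Suc j))) w"
      using A' i rw by simp
    then show "(A' *\<^sub>v vCons a w) $ i = vCons (e * a) (A3 *\<^sub>v w) $ i"
    proof (cases i)
      case 0
      have "scalar_prod (vec m (\<lambda>j. A' $$ (i, Suc j))) w = 0"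
        using A'row nm 0 that unfolding scalar_prod_def by (auto intro: sum.neutral)
      then show ?thesis using `(A' *\<^sub>v vCons a w) $ i = _` A'col 0 n by simp
    next
      case (Suc i')
      have "vec m (\<lambda>j. A' $$ (i, Suc j)) = row A3 i'"
        using Suc i nm unfolding A3_def row_def by (auto intro!: eq_vecI)
      then show ?thesis using `(A' *\<^sub>v vCons a w) $ i = _` A'col Suc i nm A3 by simp
    qed
  qed (use A' A3 nm in auto)
  define Y where "Y = vCons 1 (0\<^sub>v m) # map (vCons 0) vs3"
  have lY: "length Y = n" unfolding Y_def using l3 nm by simp
  have Yc: "Y ! i \<in> carrier_vec n" if "i < n" for i
    using that p3 l3 nm unfolding Y_def by (cases i) auto
  have Yev: "A' *\<^sub>v Y ! i = (e # es) ! i \<cdot>\<^sub>v Y ! i" if "i < n" for i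
  proof (cases i)
    case 0
    have z1: "A3 *\<^sub>v 0\<^sub>v m = 0\<^sub>v m" by (rule eq_vecI) (use A3 in auto)
    have z2: "e \<cdot>\<^sub>v 0\<^sub>v m = (0\<^sub>v m :: real vec)" by (rule eq_vecI) auto
    show ?thesis unfolding Y_def using A'v[of "0\<^sub>v m" 1] 0
      by (simp add: smult_vCons z1 z2)
  next
    case (Suc i')
    then have i': "i' < m" using that nm by simp
    then show ?thesis unfolding Y_def using A'v[of "vs3 ! i'" 0] p3 l3 Suc
      by (simp add: smult_vCons)
  qed
  have Yn: "scalar_prod (Y ! i) (Y ! i) \<noteq> 0" if "i < n" for i
    using that p3 l3 nm unfolding Y_def by (cases i) auto
  have Yo: "scalar_prod (Y ! i) (Y ! j) = 0" if "i < n" "j < n" "i \<noteq> j" for i j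
    using that p3 o3 l3 nm unfolding Y_def by (cases i; cases j) auto
  show ?case
  proof (intro exI[of _ "map (\<lambda>y. U *\<^sub>v y) Y"] conjI allI impI)
    show "length (map (\<lambda>y. U *\<^sub>v y) Y) = n" using lY by simp
    fix i assume i: "i < n"
    show "map (\<lambda>y. U *\<^sub>v y) Y ! i \<in> carrier_vec n" using i lY U by (simp add: carrier_vecI)
    show "A *\<^sub>v map (\<lambda>y. U *\<^sub>v y) Y ! i = (e # es) ! i \<cdot>\<^sub>v map (\<lambda>y. U *\<^sub>v y) Y ! i"
      using i lY Uvec[OF Yc[OF i]] Yev[OF i] U Yc[OF i] by (simp add: mult_mat_vec[of _ n n])
    show "scalar_prod (map (\<lambda>y. U *\<^sub>v y) Y ! i) (map (\<lambda>y. U *\<^sub>v y) Y ! i) \<noteq> 0"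
      using i lY Uscal[OF Yc[OF i] Yc[OF i]] Yn[OF i] by simp
    fix j assume j: "j < n" and ij: "i \<noteq> j"
    show "scalar_prod (map (\<lambda>y. U *\<^sub>v y) Y ! i) (map (\<lambda>y. U *\<^sub>v y) Y ! j) = 0"
      using i j lY Uscal[OF Yc[OF i] Yc[OF j]] Yo[OF i j ij] by simp
  qed
qed

lemma nontriv:
  fixes W :: "nat \<Rightarrow> 'b::euclidean_space"
  assumes "DIM('b) < k"
  shows "\<exists>\<alpha>. (\<exists>i<k. \<alpha> i \<noteq> 0) \<and> (\<Sum>i<k. \<alpha> i *\<^sub>R W i) = 0"
proof (cases "inj_on W {..<k}")
  case False
  then obtain i j where ij: "i < k" "j < k" "i \<noteq> j" "W i = W j"
    unfolding inj_on_def by auto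
  define \<alpha> where "\<alpha> = (\<lambda>t. if t = i then 1 else if t = j then -1 else (0::real))"
  have "(\<Sum>t<k. \<alpha> t *\<^sub>R W t) = (\<Sum>t<k. (if t = i then W i else 0) + (if t = j then - W j else 0))"
    by (rule sum.cong) (auto simp: \<alpha>_def ij(3))
  also have "\<dots> = 0" using ij by (simp add: sum.distrib)
  finally show ?thesis using ij by (intro exI[of _ \<alpha>]) (auto simp: \<alpha>_def)
next
  case True
  let ?S = "W ` {..<k}"
  have "card ?S = k" using True by (simp add: card_image)
  then have "\<not> independent ?S" using independent_bound[of ?S] assms by auto
  then obtain u where u: "\<exists>v\<in>?S. u v \<noteq> 0" "(\<Sum>v\<in>?S. u v *\<^sub>R v) = 0"
    using dependent_finite[of ?S] by auto
  have "(\<Sum>i<k. u (W i) *\<^sub>R W i) = (\<Sum>v\<in>?S. u v *\<^sub>R v)"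
    using sum.reindex[OF True, of "\<lambda>v. u v *\<^sub>R v"] by simp
  then show ?thesis using u by (intro exI[of _ "\<lambda>i. u (W i)"]) auto
qed

lemma bilin_expand:
  fixes V :: "nat \<Rightarrow> nat \<Rightarrow> real"
  assumes "finite I"
  shows "(\<Sum>k<N. (\<Sum>i\<in>I. a i * V i k) * (\<Sum>j\<in>I. b j * V j k))
     = (\<Sum>i\<in>I. \<Sum>j\<in>I. a i * b j * (\<Sum>k<N. V i k * V j k))"
proof -
  have "(\<Sum>k<N. (\<Sum>i\<in>I. a i * V i k) * (\<Sum>j\<in>I. b j * V j k))
     = (\<Sum>k<N. \<Sum>i\<in>I. \<Sum>j\<in>I. a i * b j * (V i k * V j k))"
    by (simp add: sum_product mult_ac)
  also have "\<dots> = (\<Sum>i\<in>I. \<Sum>j\<in>I. \<Sum>k<N. a i * b j * (V i k * V j k))"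
    by (subst sum.swap) (simp add: sum.swap[of _ "{..<N}"])
  also have "\<dots> = (\<Sum>i\<in>I. \<Sum>j\<in>I. a i * b j * (\<Sum>k<N. V i k * V j k))"
    by (simp add: sum_distrib_left)
  finally show ?thesis .
qed

lemma bilin_orth:
  fixes V :: "nat \<Rightarrow> nat \<Rightarrow> real"
  assumes "finite I" "\<And>i j. i \<in> I \<Longrightarrow> j \<in> I \<Longrightarrow> i \<noteq> j \<Longrightarrow> (\<Sum>k<N. V i k * V j k) = 0"
  shows "(\<Sum>k<N. (\<Sum>i\<in>I. a i * V i k) * (\<Sum>j\<in>I. b j * V j k))
     = (\<Sum>i\<in>I. a i * b i * (\<Sum>k<N. V i k * V i k))"
  unfolding bilin_expand[OF assms(1)]
proof (rule sum.cong[OF refl])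
  fix i assume i: "i \<in> I"
  have "(\<Sum>j\<in>I. a i * b j * (\<Sum>k<N. V i k * V j k)) = (\<Sum>j\<in>I. if j = i then a i * b i * (\<Sum>k<N. V i k * V i k) else 0)"
    by (rule sum.cong) (use assms i in auto)
  also have "\<dots> = a i * b i * (\<Sum>k<N. V i k * V i k)" using assms(1) i by simp
  finally show "(\<Sum>j\<in>I. a i * b j * (\<Sum>k<N. V i k * V j k)) = a i * b i * (\<Sum>k<N. V i k * V i k)" .
qed

lemma gram_id: fixes a b c :: "'a::real_inner"
  shows "norm (a - c)^2 + norm (b - c)^2 - norm (a - b)^2 = 2 * inner (a - c) (b - c)"
  by (simp add: power2_norm_eq_inner inner_diff_left inner_diff_right inner_commute algebra_simps)

lemma Mmat_entry:
  fixes P :: "nat \<Rightarrow> 'a::real_inner"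
  assumes "k < n - 1" "l < n - 1"
  shows "Mmat P n $$ (k,l) = 2 * inner (P (k+1) - P n) (P (l+1) - P n)"
  using assms gram_id[of "P (k+1)" "P n" "P (l+1)"]
  by (simp add: Mmat_def cdist_def dist_norm)

lemma Smat_entry:
  assumes "k < n - 1" "l < n - 1"
  shows "Smat \<delta> P n h $$ (k,l) = (1/(\<delta>^2-1)) * (2 * Mmat P n $$ (k,l) + Dmat \<delta> n h $$ (k,l)
     - (1+\<delta>^2) * (if k = l then 1 else 0))"
  using assms by (simp add: Smat_def Mmat_def Dmat_def)

lemma dsum: "(\<Sum>k\<in>A. \<Sum>l\<in>B. (c::real) * (f k * g l)) = c * sum f A * sum g B"
proof -
  have "c * sum f A * sum g B = (\<Sum>k\<in>A. c * f k) * sum g B" by (simp add: sum_distrib_left)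
  also have "\<dots> = (\<Sum>k\<in>A. (c * f k) * sum g B)" by (simp add: sum_distrib_right)
  also have "\<dots> = (\<Sum>k\<in>A. \<Sum>l\<in>B. c * (f k * g l))" by (simp add: sum_distrib_left mult.assoc)
  finally show ?thesis by simp
qed

lemma form_id:
  fixes P :: "nat \<Rightarrow> 'a::real_inner" and x :: "nat \<Rightarrow> real" and n h :: nat and \<delta> :: real
  assumes d1: "\<delta> > 1"
  defines "N \<equiv> n - 1"
  defines "u \<equiv> (\<Sum>k<N. if k < h then x k else 0)"
  defines "v \<equiv> (\<Sum>k<N. if k < h then 0 else x k)"
  defines "s \<equiv> (\<Sum>k<N. x k *\<^sub>R (P (k+1) - P n))"
  shows "(\<delta>^2-1) * ((\<Sum>k<N. x k * (\<Sum>l<N. Smat \<delta> P n h $$ (k,l) * x l))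
       - (1+\<delta>^2)/(1-\<delta>^2) * (\<Sum>k<N. x k * x k))
     = 4 * inner s s + (u + v) * ((1-3*\<delta>^2) * v - (3-\<delta>^2) * u)"
proof -
  define w where "w = (\<lambda>k. P (k+1) - P n)"
  define M where "M = Mmat P n"
  define D where "D = Dmat \<delta> n h"
  have dpos: "\<delta>^2 - 1 > 0" using one_less_power[OF d1, of 2] by simp
  define c0 where "c0 = 1/(\<delta>^2-1)"
  have row: "(\<Sum>l<N. Smat \<delta> P n h $$ (k,l) * x l) = c0 *
      ((\<Sum>l<N. 2 * M $$ (k,l) * x l) + (\<Sum>l<N. D $$ (k,l) * x l) - (1+\<delta>^2) * x k)" if k: "k < N" for k
  proof -
    have "(\<Sum>l<N. Smat \<delta> P n h $$ (k,l) * x l) = (\<Sum>l<N. c0 *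
      (2 * M $$ (k,l) * x l + D $$ (k,l) * x l) - c0 * (1+\<delta>^2) * (if l = k then x k else 0))"
    proof (rule sum.cong[OF refl])
      fix l assume "l \<in> {..<N}"
      then have Se: "Smat \<delta> P n h $$ (k,l) = c0 * (2 * M $$ (k,l) + D $$ (k,l) - (1+\<delta>^2) * (if k = l then 1 else 0))"
        using k unfolding c0_def M_def D_def N_def by (intro Smat_entry) auto
      show "Smat \<delta> P n h $$ (k,l) * x l = c0 *
        (2 * M $$ (k,l) * x l + D $$ (k,l) * x l) - c0 * (1+\<delta>^2) * (if l = k then x k else 0)"
        unfolding Se by (cases "l = k") (simp_all add: algebra_simps)
    qed
    also have "\<dots> = c0 *
      ((\<Sum>l<N. 2 * M $$ (k,l) * x l) + (\<Sum>l<N. D $$ (k,l) * x l) - (1+\<delta>^2) * x k)"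
    proof -
      have dl: "(\<Sum>l<N. c0 * (1+\<delta>^2) * (if l = k then x k else 0)) = c0 * (1+\<delta>^2) * x k"
      proof -
        have "(\<Sum>l<N. c0 * (1+\<delta>^2) * (if l = k then x k else 0)) = (\<Sum>l<N. if l = k then c0 * (1+\<delta>^2) * x k else 0)"
          by (rule sum.cong) auto
        then show ?thesis using k by simp
      qed
      have "(\<Sum>l<N. c0 * (2 * M $$ (k,l) * x l + D $$ (k,l) * x l) - c0 * (1+\<delta>^2) * (if l = k then x k else 0))
         = c0 * ((\<Sum>l<N. 2 * M $$ (k,l) * x l) + (\<Sum>l<N. D $$ (k,l) * x l)) - c0 * (1+\<delta>^2) * x k"
        unfolding sum_subtractf dl by (simp add: sum.distrib sum_distrib_left distrib_left)
      then show ?thesis by (simp add: algebra_simps)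
    qed
    finally show ?thesis .
  qed
  have QM: "(\<Sum>k<N. x k * (\<Sum>l<N. 2 * M $$ (k,l) * x l)) = 4 * inner s s"
  proof -
    have "(\<Sum>k<N. x k * (\<Sum>l<N. 2 * M $$ (k,l) * x l)) = (\<Sum>k<N. x k * (\<Sum>l<N. 4 * (x l * inner (w l) (w k))))"
    proof (rule sum.cong[OF refl])
      fix k assume k: "k \<in> {..<N}"
      have "(\<Sum>l<N. 2 * M $$ (k,l) * x l) = (\<Sum>l<N. 4 * (x l * inner (w l) (w k)))"
      proof (rule sum.cong[OF refl])
        fix l assume "l \<in> {..<N}"
        then have "M $$ (k,l) = 2 * inner (w k) (w l)" using k unfolding M_def w_def N_def
          by (intro Mmat_entry) auto
        then show "2 * M $$ (k,l) * x l = 4 * (x l * inner (w l) (w k))" by (simp add: inner_commute)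
      qed
      then show "x k * (\<Sum>l<N. 2 * M $$ (k,l) * x l) = x k * (\<Sum>l<N. 4 * (x l * inner (w l) (w k)))"
        by simp
    qed
    also have "\<dots> = 4 * inner s s" unfolding s_def w_def
      by (simp add: inner_sum_left inner_sum_right sum_distrib_left mult_ac)
    finally show ?thesis .
  qed
  define cx where "cx = (\<lambda>k. if k < h then x k else 0)"
  define px where "px = (\<lambda>k. if k < h then 0 else x k)"
  have QD: "(\<Sum>k<N. x k * (\<Sum>l<N. D $$ (k,l) * x l)) =
     (\<delta>^2-3) * u * u - (1+\<delta>^2) * u * v - (1+\<delta>^2) * v * u + (1-3*\<delta>^2) * v * v"
  proof -
    have "(\<Sum>k<N. x k * (\<Sum>l<N. D $$ (k,l) * x l)) = (\<Sum>k<N. \<Sum>l<N.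
       (\<delta>^2-3) * (cx k * cx l) - (1+\<delta>^2) * (cx k * px l) - (1+\<delta>^2) * (px k * cx l) + (1-3*\<delta>^2) * (px k * px l))"
      unfolding sum_distrib_left
      by (intro sum.cong refl) (auto simp: D_def Dmat_def N_def cx_def px_def algebra_simps)
    also have "\<dots> = (\<delta>^2-3) * u * u - (1+\<delta>^2) * u * v - (1+\<delta>^2) * v * u + (1-3*\<delta>^2) * v * v"
      unfolding u_def v_def cx_def[symmetric] px_def[symmetric]
      by (simp only: sum.distrib sum_subtractf dsum)
    finally show ?thesis .
  qed
  define QA where "QA = (\<lambda>k. (\<Sum>l<N. 2 * M $$ (k,l) * x l))"
  define QB where "QB = (\<lambda>k. (\<Sum>l<N. D $$ (k,l) * x l))"
  have "(\<Sum>k<N. x k * (\<Sum>l<N. Smat \<delta> P n h $$ (k,l) * x l)) =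
     (\<Sum>k<N. c0 * (x k * QA k) + c0 * (x k * QB k) - c0 * (1+\<delta>^2) * (x k * x k))"
  proof (rule sum.cong[OF refl])
    fix k assume "k \<in> {..<N}"
    then have r: "(\<Sum>l<N. Smat \<delta> P n h $$ (k,l) * x l) = c0 * (QA k + QB k - (1+\<delta>^2) * x k)"
      using row unfolding QA_def QB_def by simp
    show "x k * (\<Sum>l<N. Smat \<delta> P n h $$ (k,l) * x l) =
      c0 * (x k * QA k) + c0 * (x k * QB k) - c0 * (1+\<delta>^2) * (x k * x k)"
      unfolding r by (simp add: algebra_simps)
  qed
  also have "\<dots> = c0 * ((\<Sum>k<N. x k * QA k) + (\<Sum>k<N. x k * QB k) - (1+\<delta>^2) * (\<Sum>k<N. x k * x k))"
    by (simp only: sum.distrib sum_subtractf sum_distrib_left[symmetric] distrib_left right_diff_distrib mult.assoc)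
      (simp add: algebra_simps)
  finally have "(\<Sum>k<N. x k * (\<Sum>l<N. Smat \<delta> P n h $$ (k,l) * x l)) = c0 *
      ((\<Sum>k<N. x k * (\<Sum>l<N. 2 * M $$ (k,l) * x l)) + (\<Sum>k<N. x k * (\<Sum>l<N. D $$ (k,l) * x l))
        - (1+\<delta>^2) * (\<Sum>k<N. x k * x k))" unfolding QA_def QB_def .
  then have E1: "(\<delta>^2-1) * (\<Sum>k<N. x k * (\<Sum>l<N. Smat \<delta> P n h $$ (k,l) * x l)) =
      4 * inner s s + ((\<delta>^2-3) * u * u - (1+\<delta>^2) * u * v - (1+\<delta>^2) * v * u + (1-3*\<delta>^2) * v * v)
        - (1+\<delta>^2) * (\<Sum>k<N. x k * x k)"
    using dpos QM QD unfolding c0_def by simp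
  have E2: "(\<delta>^2-1) * ((1+\<delta>^2)/(1-\<delta>^2)) = -(1+\<delta>^2)" using dpos
    by (simp add: field_simps)
  have gen: "(\<delta>^2-1) * (Q - cc * X) = R"
    if "(\<delta>^2-1) * Q = R - dd * X" "(\<delta>^2-1) * cc = - dd" for Q cc X R dd :: real
  proof -
    have "(\<delta>^2-1) * (Q - cc * X) = (\<delta>^2-1) * Q - ((\<delta>^2-1) * cc) * X" by (simp add: algebra_simps)
    also have "\<dots> = R" unfolding that by simp
    finally show ?thesis .
  qed
  have "(\<delta>^2-1) * ((\<Sum>k<N. x k * (\<Sum>l<N. Smat \<delta> P n h $$ (k,l) * x l))
       - (1+\<delta>^2)/(1-\<delta>^2) * (\<Sum>k<N. x k * x k)) =
      4 * inner s s + ((\<delta>^2-3) * u * u - (1+\<delta>^2) * u * v - (1+\<delta>^2) * v * u + (1-3*\<delta>^2) * v * v)"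
    by (rule gen[OF E1 E2])
  also have "\<dots> = 4 * inner s s + (u + v) * ((1-3*\<delta>^2) * v - (3-\<delta>^2) * u)"
    by (simp add: algebra_simps)
  finally show ?thesis .
qed

lemma eig_quad:
  fixes S :: "real mat" and V :: "nat \<Rightarrow> nat \<Rightarrow> real" and a es :: "nat \<Rightarrow> real" and N :: nat and I :: "nat set"
  assumes fin: "finite I"
    and eig: "\<And>i k. i \<in> I \<Longrightarrow> k < N \<Longrightarrow> (\<Sum>l<N. S $$ (k,l) * V i l) = es i * V i k"
    and orth: "\<And>i j. i \<in> I \<Longrightarrow> j \<in> I \<Longrightarrow> i \<noteq> j \<Longrightarrow> (\<Sum>k<N. V i k * V j k) = 0"
  defines "x \<equiv> (\<lambda>k. \<Sum>i\<in>I. a i * V i k)"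
  shows "(\<Sum>k<N. x k * (\<Sum>l<N. S $$ (k,l) * x l)) - c * (\<Sum>k<N. x k * x k)
     = (\<Sum>i\<in>I. (a i * a i) * (es i - c) * (\<Sum>k<N. V i k * V i k))"
proof -
  have Sx: "(\<Sum>l<N. S $$ (k,l) * x l) = (\<Sum>i\<in>I. (a i * es i) * V i k)" if k: "k < N" for k
  proof -
    have "(\<Sum>l<N. S $$ (k,l) * x l) = (\<Sum>l<N. \<Sum>i\<in>I. a i * (S $$ (k,l) * V i l))"
      unfolding x_def by (simp add: sum_distrib_left mult_ac)
    also have "\<dots> = (\<Sum>i\<in>I. a i * (\<Sum>l<N. S $$ (k,l) * V i l))"
      by (subst sum.swap) (simp add: sum_distrib_left)
    also have "\<dots> = (\<Sum>i\<in>I. (a i * es i) * V i k)"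
      by (rule sum.cong) (use eig k in auto)
    finally show ?thesis .
  qed
  have "(\<Sum>k<N. x k * (\<Sum>l<N. S $$ (k,l) * x l)) = (\<Sum>k<N. x k * (\<Sum>i\<in>I. (a i * es i) * V i k))"
    by (rule sum.cong) (use Sx in auto)
  also have "\<dots> = (\<Sum>i\<in>I. a i * (a i * es i) * (\<Sum>k<N. V i k * V i k))"
    unfolding x_def by (rule bilin_orth[OF fin orth])
  finally have 1: "(\<Sum>k<N. x k * (\<Sum>l<N. S $$ (k,l) * x l)) = (\<Sum>i\<in>I. a i * (a i * es i) * (\<Sum>k<N. V i k * V i k))" .
  have 2: "(\<Sum>k<N. x k * x k) = (\<Sum>i\<in>I. a i * a i * (\<Sum>k<N. V i k * V i k))"
    unfolding x_def by (rule bilin_orth[OF fin orth])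
  show ?thesis unfolding 1 2
    by (simp add: sum_distrib_left sum_subtractf[symmetric] algebra_simps)
qed

lemma sum_neg_strict:
  fixes f :: "nat \<Rightarrow> real"
  assumes "finite I" "i \<in> I" "f i < 0" "\<And>i. i \<in> I \<Longrightarrow> f i \<le> 0"
  shows "sum f I < 0"
proof -
  have "0 < sum (\<lambda>i. - f i) I" using assms by (intro sum_pos2[of I i]) auto
  then show ?thesis by (simp add: sum_negf)
qed

theorem mainTheorem5:
  fixes \<delta> :: real and P :: "nat \<Rightarrow> real ^ 'd" and n h :: nat and es :: "real list"
  assumes "\<delta> > 1"
    and "n \<ge> 1"
    and "\<And>i j. i \<in> {1..n} \<Longrightarrow> j \<in> {1..n} \<Longrightarrow> i \<noteq> j \<Longrightarrow> P i \<noteq> P j"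
    and "\<And>i j. i \<in> {1..n} \<Longrightarrow> j \<in> {1..n} \<Longrightarrow> i \<noteq> j \<Longrightarrow> cdist P i j \<in> {1, \<delta>}"
    and "h \<le> n - 1"
    and "\<And>i. 1 \<le> i \<Longrightarrow> i \<le> h \<Longrightarrow> cdist P i n = 1"
    and "\<And>i. h < i \<Longrightarrow> i \<le> n - 1 \<Longrightarrow> cdist P i n = \<delta>"
    and "eigvals_desc (Smat \<delta> P n h) es"
  shows "(\<forall>i. CARD('d) + 2 \<le> i \<and> i \<le> n - 2 \<longrightarrow> es ! (i - 1) = (1 + \<delta>^2) / (1 - \<delta>^2))
       \<and> (n \<ge> CARD('d) + 3 \<longrightarrow> es ! (n - 2) \<le> (1 + \<delta>^2) / (1 - \<delta>^2))"
proof -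
  let ?N = "n - 1"
  define S where "S = Smat \<delta> P n h"
  define c where "c = (1 + \<delta>^2) / (1 - \<delta>^2)"
  define d where "d = CARD('d)"
  have dpos: "\<delta>^2 - 1 > 0" using one_less_power[OF assms(1), of 2] by simp
  have Mc: "Mmat P n \<in> carrier_mat ?N ?N" by (simp add: Mmat_def)
  have Dc: "Dmat \<delta> n h \<in> carrier_mat ?N ?N" by (simp add: Dmat_def)
  have Sc: "S \<in> carrier_mat ?N ?N" unfolding S_def Smat_def
    by (intro smult_carrier_mat add_carrier_mat minus_carrier_mat Mc Dc one_carrier_mat)
  have Ssym: "S\<^sup>T = S"
  proof (rule eq_matI)
    fix i j assume "i < dim_row S" "j < dim_col S"
    then have ij: "i < ?N" "j < ?N" using Sc by auto
    have "Mmat P n $$ (j,i) = Mmat P n $$ (i,j)" using ij by (simp add: Mmat_entry inner_commute)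
    moreover have "Dmat \<delta> n h $$ (j,i) = Dmat \<delta> n h $$ (i,j)" using ij by (auto simp: Dmat_def)
    ultimately show "S\<^sup>T $$ (i, j) = S $$ (i, j)" using ij Sc unfolding S_def
      by (simp add: Smat_entry)
  qed (use Sc in auto)
  from assms(8) have cp: "char_poly S = (\<Prod>a\<leftarrow>es. [:-a, 1:])" and srt: "sorted_wrt (\<ge>) es"
    unfolding eigvals_desc_def S_def by auto
  have les: "length es = ?N" using degree_monic_char_poly[OF Sc] cp degree_linear_factors[of "\<lambda>a. -a" es]
    by simp
  have mono: "es ! j \<le> es ! i" if "i \<le> j" "j < ?N" for i j
    using srt that les unfolding sorted_wrt_iff_nth_less by (cases "i = j") auto
  obtain vs where lvs: "length vs = ?N"
    and pv: "\<forall>i<?N. vs!i \<in> carrier_vec ?N \<and> S *\<^sub>v vs!i = es!i \<cdot>\<^sub>v vs!i \<and> scalar_prod (vs!i) (vs!i) \<noteq> 0"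
    and ov: "\<forall>i<?N. \<forall>j<?N. i\<noteq>j \<longrightarrow> scalar_prod (vs!i) (vs!j) = 0"
    using spectral_sym[OF Sc Ssym cp] by blast
  define V where "V = (\<lambda>i k. vs ! i $ k)"
  have dimv: "dim_vec (vs!i) = ?N" if "i < ?N" for i using pv that by auto
  have sp: "scalar_prod (vs!i) (vs!j) = (\<Sum>k<?N. V i k * V j k)" if "i < ?N" "j < ?N" for i j
  proof -
    have "dim_vec (vs!j) = ?N" using pv that(2) by auto
    then show ?thesis unfolding scalar_prod_def V_def by (simp add: atLeast0LessThan)
  qed
  have eigV: "(\<Sum>l<?N. S $$ (k,l) * V i l) = es ! i * V i k" if "i < ?N" "k < ?N" for i k
  proof -
    have k': "k < dim_vec (vs!i)" using dimv[OF that(1)] that(2) by simp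
    have "S *\<^sub>v vs!i = es!i \<cdot>\<^sub>v vs!i" using pv that(1) by simp
    then have "(S *\<^sub>v vs!i) $ k = es ! i * V i k" using k' unfolding V_def by simp
    moreover have "(S *\<^sub>v vs!i) $ k = (\<Sum>l<?N. S $$ (k,l) * V i l)"
      using that Sc dimv[OF that(1)] unfolding V_def by (simp add: scalar_prod_def atLeast0LessThan)
    ultimately show ?thesis by simp
  qed
  have orthV: "(\<Sum>k<?N. V i k * V j k) = 0" if "i < ?N" "j < ?N" "i \<noteq> j" for i j
    using ov that sp by auto
  have Gpos: "(\<Sum>k<?N. V i k * V i k) > 0" if "i < ?N" for i
  proof -
    have "(\<Sum>k<?N. V i k * V i k) \<ge> 0" by (intro sum_nonneg) auto
    moreover have "(\<Sum>k<?N. V i k * V i k) \<noteq> 0" using pv sp that by auto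
    ultimately show ?thesis by simp
  qed
  define w where "w = (\<lambda>k. P (k+1) - P n)"
  have partA: "es ! j \<le> c" if j: "d + 1 \<le> j" "j < ?N" for j
  proof (rule ccontr)
    assume "\<not> es ! j \<le> c"
    then have ejc: "es ! j > c" by simp
    define K where "K = d + 2"
    define W where "W = (\<lambda>i. ((\<Sum>k<?N. V i k *\<^sub>R w k), (\<Sum>k<?N. if k < h then V i k else 0)))"
    have "DIM((real^'d) \<times> real) < K" unfolding d_def K_def by simp
    from nontriv[OF this, of W] obtain \<alpha> where
      a1: "\<exists>i<K. \<alpha> i \<noteq> 0" and a2: "(\<Sum>i<K. \<alpha> i *\<^sub>R W i) = 0" by blast
    define x where "x = (\<lambda>k. \<Sum>i\<in>{..<K}. \<alpha> i * V i k)"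
    have s0: "(\<Sum>k<?N. x k *\<^sub>R (P (k+1) - P n)) = 0"
    proof -
      have "(\<Sum>k<?N. x k *\<^sub>R (P (k+1) - P n)) = (\<Sum>k<?N. \<Sum>i<K. (\<alpha> i * V i k) *\<^sub>R w k)"
        unfolding x_def w_def by (simp add: scaleR_sum_left)
      also have "\<dots> = (\<Sum>i<K. \<alpha> i *\<^sub>R (\<Sum>k<?N. V i k *\<^sub>R w k))"
        by (subst sum.swap) (simp add: scaleR_sum_right)
      also have "\<dots> = fst (\<Sum>i<K. \<alpha> i *\<^sub>R W i)" unfolding W_def by (simp add: fst_sum)
      finally show ?thesis using a2 by simp
    qed
    have u0: "(\<Sum>k<?N. if k < h then x k else 0) = 0"
    proof -
      have "(\<Sum>k<?N. if k < h then x k else 0) = (\<Sum>k<?N. \<Sum>i<K. \<alpha> i * (if k < h then V i k else 0))"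
        unfolding x_def by (rule sum.cong) auto
      also have "\<dots> = (\<Sum>i<K. \<alpha> i * (\<Sum>k<?N. if k < h then V i k else 0))"
        by (subst sum.swap) (simp add: sum_distrib_left)
      also have "\<dots> = snd (\<Sum>i<K. \<alpha> i *\<^sub>R W i)" unfolding W_def by (simp add: snd_sum)
      finally show ?thesis using a2 by simp
    qed
    define v where "v = (\<Sum>k<?N. if k < h then 0 else x k)"
    have F: "(\<delta>^2-1) * ((\<Sum>k<?N. x k * (\<Sum>l<?N. S $$ (k,l) * x l)) - c * (\<Sum>k<?N. x k * x k))
       = (1 - 3 * \<delta>^2) * (v * v)"
      using form_id[where P=P and x=x and n=n and h=h, OF assms(1)] s0 u0 unfolding S_def c_def v_def
      by (simp add: algebra_simps)
    have "(1 - 3 * \<delta>^2) * (v * v) \<le> 0" using dpos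
      by (intro mult_nonpos_nonneg) auto
    moreover
    have dj: "K \<le> ?N" using j unfolding K_def by simp
    have E: "(\<Sum>k<?N. x k * (\<Sum>l<?N. S $$ (k,l) * x l)) - c * (\<Sum>k<?N. x k * x k)
      = (\<Sum>i\<in>{..<K}. (\<alpha> i * \<alpha> i) * (es ! i - c) * (\<Sum>k<?N. V i k * V i k))"
      unfolding x_def
      by (rule eig_quad[where es = "\<lambda>i. es ! i"]) (use dj eigV orthV in auto)
    have "(\<Sum>i\<in>{..<K}. (\<alpha> i * \<alpha> i) * (es ! i - c) * (\<Sum>k<?N. V i k * V i k)) > 0"
    proof -
      from a1 obtain i0 where i0: "i0 < K" "\<alpha> i0 \<noteq> 0" by blast
      have pos: "es ! i - c > 0" if "i < K" for i
        using mono[of i j] that j ejc unfolding K_def by simp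
      show ?thesis
      proof (rule sum_pos2[of _ i0])
        show "0 < \<alpha> i0 * \<alpha> i0 * (es ! i0 - c) * (\<Sum>k<?N. V i0 k * V i0 k)"
        proof -
          have sq2: "(\<alpha> i0)^2 > 0" using i0(2) by simp
          have sq: "\<alpha> i0 * \<alpha> i0 > 0" using sq2 by (simp add: power2_eq_square)
          have g: "(\<Sum>k<?N. V i0 k * V i0 k) > 0" using Gpos[of i0] i0 dj by simp
          show ?thesis by (rule mult_pos_pos[OF mult_pos_pos[OF sq pos[OF i0(1)]] g])
        qed
        fix i show "i \<in> {..<K} \<Longrightarrow> 0 \<le> \<alpha> i * \<alpha> i * (es ! i - c) * (\<Sum>k<?N. V i k * V i k)"
        proof -
          assume i: "i \<in> {..<K}"
          have g: "(\<Sum>k<?N. V i k * V i k) \<ge> 0" using Gpos[of i] i dj by simp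
          have p: "es ! i - c \<ge> 0" using pos[of i] i by simp
          have sq: "\<alpha> i * \<alpha> i \<ge> 0" by simp
          show ?thesis by (rule mult_nonneg_nonneg[OF mult_nonneg_nonneg[OF sq p] g])
        qed
      qed (use i0 in auto)
    qed
    then have "(\<delta>^2-1) * ((\<Sum>k<?N. x k * (\<Sum>l<?N. S $$ (k,l) * x l)) - c * (\<Sum>k<?N. x k * x k)) > 0"
      using E dpos by simp
    ultimately show False using F by simp
  qed
  have partB: "c \<le> es ! j" if j: "j + 1 < ?N" for j
  proof (rule ccontr)
    assume "\<not> c \<le> es ! j"
    then have ejc: "es ! j < c" by simp
    define L where "L = ?N - 1"
    have jL: "j < L" "L < ?N" using j unfolding L_def by auto
    define sv where "sv = (\<lambda>i. \<Sum>k<?N. V i k)"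
    define \<alpha> where "\<alpha> = (if sv L = 0 \<and> sv j = 0 then (\<lambda>i. if i = j then 1 else 0)
       else (\<lambda>i. if i = j then sv L else if i = L then - sv j else (0::real)))"
    define I where "I = {j, L}"
    have a1: "\<exists>i\<in>I. \<alpha> i \<noteq> 0" unfolding \<alpha>_def I_def using jL by auto
    have a2: "\<alpha> j * sv j + \<alpha> L * sv L = 0" unfolding \<alpha>_def using jL by auto
    define x where "x = (\<lambda>k. \<Sum>i\<in>I. \<alpha> i * V i k)"
    have sx: "(\<Sum>k<?N. x k) = 0"
    proof -
      have "(\<Sum>k<?N. x k) = (\<Sum>i\<in>I. \<alpha> i * sv i)"
        unfolding x_def sv_def by (subst sum.swap) (simp add: sum_distrib_left)
      also have "\<dots> = \<alpha> j * sv j + \<alpha> L * sv L" unfolding I_def using jL by simp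
      finally show ?thesis using a2 by simp
    qed
    have uv: "(\<Sum>k<?N. if k < h then x k else 0) + (\<Sum>k<?N. if k < h then 0 else x k) = 0"
      unfolding sum.distrib[symmetric] using sx by (simp add: if_distrib cong: if_cong)
    have F: "(\<delta>^2-1) * ((\<Sum>k<?N. x k * (\<Sum>l<?N. S $$ (k,l) * x l)) - c * (\<Sum>k<?N. x k * x k))
       = 4 * inner (\<Sum>k<?N. x k *\<^sub>R (P (k+1) - P n)) (\<Sum>k<?N. x k *\<^sub>R (P (k+1) - P n))"
      using form_id[where P=P and x=x and n=n and h=h, OF assms(1)] uv unfolding S_def c_def
      by simp
    have "(\<delta>^2-1) * ((\<Sum>k<?N. x k * (\<Sum>l<?N. S $$ (k,l) * x l)) - c * (\<Sum>k<?N. x k * x k)) \<ge> 0"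
      unfolding F by simp
    moreover
    have E: "(\<Sum>k<?N. x k * (\<Sum>l<?N. S $$ (k,l) * x l)) - c * (\<Sum>k<?N. x k * x k)
      = (\<Sum>i\<in>I. (\<alpha> i * \<alpha> i) * (es ! i - c) * (\<Sum>k<?N. V i k * V i k))"
      unfolding x_def
      by (rule eig_quad[where es = "\<lambda>i. es ! i"]) (use jL eigV orthV in \<open>auto simp: I_def\<close>)
    have neg: "es ! i - c < 0" if "i \<in> I" for i
      using that mono[of j L] jL ejc unfolding I_def by auto
    have "(\<Sum>i\<in>I. (\<alpha> i * \<alpha> i) * (es ! i - c) * (\<Sum>k<?N. V i k * V i k)) < 0"
    proof -
      from a1 obtain i0 where i0: "i0 \<in> I" "\<alpha> i0 \<noteq> 0" by blast
      have iN: "i < ?N" if "i \<in> I" for i using that jL unfolding I_def by auto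
      show ?thesis
      proof (rule sum_neg_strict[of _ i0])
        show "\<alpha> i0 * \<alpha> i0 * (es ! i0 - c) * (\<Sum>k<?N. V i0 k * V i0 k) < 0"
        proof -
          have sq2: "(\<alpha> i0)^2 > 0" using i0(2) by simp
          have sq: "\<alpha> i0 * \<alpha> i0 > 0" using sq2 by (simp add: power2_eq_square)
          have g: "(\<Sum>k<?N. V i0 k * V i0 k) > 0" using Gpos[OF iN[OF i0(1)]] .
          show ?thesis by (rule mult_neg_pos[OF mult_pos_neg[OF sq neg[OF i0(1)]] g])
        qed
        fix i show "i \<in> I \<Longrightarrow> \<alpha> i * \<alpha> i * (es ! i - c) * (\<Sum>k<?N. V i k * V i k) \<le> 0"
        proof -
          assume i: "i \<in> I"
          have g: "(\<Sum>k<?N. V i k * V i k) \<ge> 0" using Gpos[OF iN[OF i]] by simp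
          have p: "es ! i - c \<le> 0" using neg[OF i] by simp
          have sq: "\<alpha> i * \<alpha> i \<ge> 0" by simp
          show ?thesis by (rule mult_nonpos_nonneg[OF mult_nonneg_nonpos[OF sq p] g])
        qed
      qed (use i0 in \<open>auto simp: I_def\<close>)
    qed
    then have "(\<delta>^2-1) * ((\<Sum>k<?N. x k * (\<Sum>l<?N. S $$ (k,l) * x l)) - c * (\<Sum>k<?N. x k * x k)) < 0"
      using E dpos by (simp add: mult_pos_neg)
    ultimately show False by simp
  qed
  show ?thesis
  proof (intro conjI allI impI)
    fix i assume i: "CARD('d) + 2 \<le> i \<and> i \<le> n - 2"
    then have "es ! (i - 1) \<le> c" using partA[of "i - 1"] unfolding d_def by auto
    moreover have "c \<le> es ! (i - 1)" using partB[of "i - 1"] i by auto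
    ultimately show "es ! (i - 1) = (1 + \<delta>^2) / (1 - \<delta>^2)" unfolding c_def by simp
  next
    assume "n \<ge> CARD('d) + 3"
    then show "es ! (n - 2) \<le> (1 + \<delta>^2) / (1 - \<delta>^2)"
      using partA[of "n - 2"] unfolding d_def c_def by auto
  qed
qed

end
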